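(* Fix an iteration $t\ge 1$ of importance-sampling-based BoostTransformer, with current aggregated predictor $f_{t-1}$, and let $f^*$ be a minimizer of the risk $\mathcal{R}$. For a probability distribution $P_t=(P_t^1,\dots,P_t^n)$ on $\{1,\dots,n\}$ with all $P_t^i>0$, let the multiset $\mathcal{I}^t=\{i_1,\dots,i_m\}$ ($m\ge 1$) be drawn by sampling $m$ indices independently according to $P_t$, define the importance-weighted functional gradient estimate $$\bar g_t^{\mathcal{I}^t}=\frac{1}{m}\sum_{k=1}^{m}\frac{1}{n\,P_t^{i_k}}\,g_t^{i_k},$$ the update $f_t=f_{t-1}+\alpha_t\,\bar g_t^{\mathcal{I}^t}$ with a fixed step $\alpha_t\in\mathbb{R}$ (not depending on $P_t$), and the expected training progress $$\mathbb{E}_{P_t}\big[\Delta^{(t)}\big]=\|f_{t-1}-f^*\|^2-\mathbb{E}_{P_t}\big[\|f_t-f^*\|^2\,\big|\,\mathcal{F}^{t-1}\big].$$ Then the distribution $$P_t^i=\frac{\|w(x_i,z_i)\|}{\sum_{j=1}^{n}\|w(x_j,z_j)\|},\qquad i=1,\dots,n,$$ maximizes $\mathbb{E}_{P_t}[\Delta^{(t)}]$ over all such distributions $P_t$; that is, the optimal probability of selecting sample $i$ is proportional to the norm of its boosting weight vector.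
   Context: Multiclass boosting setting: training set $\mathcal{D}=\{(x_1,z_1),\dots,(x_n,z_n)\}$ with labels $z_i\in\{1,\dots,M\}$; predictors $f:\mathcal{X}\to\mathbb{R}^M$ with components $f_k$. The loss is $L(z,f(x))=\sum_{j\ne z}e^{\frac12[f_z(x)-f_j(x)]}$ and the risk is $\mathcal{R}[f]=\frac{1}{n}\sum_{i=1}^n L(z_i,f(x_i))$. The boosting weight vector $w(x,z)\in\mathbb{R}^M$ at the current predictor $f=f_{t-1}$ is $w_k(x,z)=-e^{-\frac12[f_z(x)-f_k(x)]}$ for $k\ne z$ and $w_z(x,z)=\sum_{j\ne z}e^{-\frac12[f_z(x)-f_j(x)]}$. Predictors and functional gradients are regarded as elements of a real inner product space with norm $\|\cdot\|$. For each sample $i$, $g_t^i$ denotes the functional (directional) gradient of the $i$-th loss term $L(z_i,\cdot)$ at $f_{t-1}$, and the full functional gradient is $g_t=\frac1n\sum_{i=1}^n g_t^i$; as in the paper, the per-sample gradient is identified with the boosting weight up to a common positive scale, so $\|g_t^i\|=\beta\,\|w(x_i,z_i)\|$ for a fixed $\beta>0$. The importance-weighted estimate is unbiased: $\mathbb{E}_{P_t}[\bar g_t^{\mathcal{I}^t}]=g_t$. $\mathcal{F}^{t-1}$ denotes the history of the algorithm up to iteration $t-1$ (so $f_{t-1}$, the $w(x_i,z_i)$ and the $g_t^i$ are fixed given $\mathcal{F}^{t-1}$). *)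

theory Defs
  imports "HOL-Analysis.Analysis" "HOL-Library.FuncSet"
begin

definition mc_loss :: "'k::finite \<Rightarrow> real^'k \<Rightarrow> real" where
  "mc_loss zz u = (\<Sum>j\<in>UNIV - {zz}. exp ((u $ zz - u $ j) / 2))"

text \<open>Empirical risk of a predictor f, given as an element of the inner product space 'v
  together with its evaluation map ev.  Samples are indexed 0..n-1.\<close>
definition mc_risk :: "('v \<Rightarrow> 'a \<Rightarrow> real^'k::finite) \<Rightarrow> nat \<Rightarrow> (nat \<Rightarrow> 'a) \<Rightarrow> (nat \<Rightarrow> 'k)
    \<Rightarrow> 'v \<Rightarrow> real" where
  "mc_risk ev n x z f = (1 / real n) * (\<Sum>i<n. mc_loss (z i) (ev f (x i)))"

definition bweight :: "'k::finite \<Rightarrow> real^'k \<Rightarrow> real^'k" where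
  "bweight zz u = (\<chi> k. if k = zz then (\<Sum>j\<in>UNIV - {zz}. exp (- (u $ zz - u $ j) / 2))
                         else - exp (- (u $ zz - u $ k) / 2))"

definition gbar :: "nat \<Rightarrow> nat \<Rightarrow> (nat \<Rightarrow> 'v::real_vector) \<Rightarrow> (nat \<Rightarrow> real) \<Rightarrow> (nat \<Rightarrow> nat) \<Rightarrow> 'v" where
  "gbar n m g P s = (1 / real m) *\<^sub>R (\<Sum>k<m. (1 / (real n * P (s k))) *\<^sub>R g (s k))"

text \<open>Expected progress E_P[Delta] = ||f0 - f*||^2 - E_P ||f0 + alpha gbar - f*||^2, where
  the expectation is over m i.i.d. draws from P on {0..n-1}, written out as a finite sum over
  all index sequences with their product probabilities.\<close>
definition exp_progress :: "nat \<Rightarrow> nat \<Rightarrow> (nat \<Rightarrow> 'v::real_inner) \<Rightarrow> real \<Rightarrow> 'v \<Rightarrow> 'v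
    \<Rightarrow> (nat \<Rightarrow> real) \<Rightarrow> real" where
  "exp_progress n m g alpha f0 fstar P =
     (norm (f0 - fstar))\<^sup>2 -
     (\<Sum>s\<in>PiE {..<m} (\<lambda>_. {..<n}).
        (\<Prod>k<m. P (s k)) * (norm (f0 + alpha *\<^sub>R gbar n m g P s - fstar))\<^sup>2)"

definition is_sampling_dist :: "nat \<Rightarrow> (nat \<Rightarrow> real) \<Rightarrow> bool" where
  "is_sampling_dist n P \<longleftrightarrow> (\<forall>i<n. P i > 0) \<and> (\<Sum>i<n. P i) = 1"

end

theory Submission
  imports Defs
begin

lemma E_gen:
  fixes P :: "nat \<Rightarrow> real" and m :: nat
  assumes K: "K \<subseteq> {..<m}" and sumP: "(\<Sum>i<n. P i) = 1"
  shows "(\<Sum>s\<in>PiE {..<m} (\<lambda>_. {..<n}). (\<Prod>k<m. P (s k)) * (\<Prod>k\<in>K. h k (s k)))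
       = (\<Prod>k\<in>K. \<Sum>i<n. P i * h k i)"
proof -
  have "(\<Sum>s\<in>PiE {..<m} (\<lambda>_. {..<n}). (\<Prod>k<m. P (s k)) * (\<Prod>k\<in>K. h k (s k)))
      = (\<Sum>s\<in>PiE {..<m} (\<lambda>_. {..<n}). \<Prod>k<m. P (s k) * (if k\<in>K then h k (s k) else 1))"
  proof (rule sum.cong[OF refl])
    fix s
    have "(\<Prod>k\<in>K. h k (s k)) = (\<Prod>k<m. if k\<in>K then h k (s k) else 1)"
      using prod.inter_restrict[where A="{..<m}" and g="\<lambda>k. h k (s k)" and B=K, OF finite_lessThan[of m]] K by (simp add: Int_absorb1)
    then show "(\<Prod>k<m. P (s k)) * (\<Prod>k\<in>K. h k (s k)) = (\<Prod>k<m. P (s k) * (if k\<in>K then h k (s k) else 1))"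
      by (simp add: prod.distrib)
  qed
  also have "\<dots> = (\<Prod>k<m. \<Sum>i<n. P i * (if k\<in>K then h k i else 1))"
    by (rule prod_sum_PiE[where A="{..<m}" and B="\<lambda>_. {..<n}" and f="\<lambda>k i. P i * (if k\<in>K then h k i else 1)", symmetric]) auto
  also have "\<dots> = (\<Prod>k<m. if k\<in>K then \<Sum>i<n. P i * h k i else 1)"
    by (rule prod.cong[OF refl]) (simp add: sumP)
  also have "\<dots> = (\<Prod>k\<in>K. \<Sum>i<n. P i * h k i)"
    using prod.inter_restrict[where A="{..<m}" and g="\<lambda>k. \<Sum>i<n. P i * h k i" and B=K, OF finite_lessThan[of m]] K by (simp add: Int_absorb1)
  finally show ?thesis .
qed

lemma E_one:
  fixes P :: "nat \<Rightarrow> real" and m :: nat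
  assumes "jj < m" and sumP: "(\<Sum>i<n. P i) = 1"
  shows "(\<Sum>s\<in>PiE {..<m} (\<lambda>_. {..<n}). (\<Prod>k<m. P (s k)) * h (s jj)) = (\<Sum>i<n. P i * h i)"
  using E_gen[where K="{jj}" and m=m and n=n and P=P and h="\<lambda>_. h"] assms by simp

lemma E_const:
  fixes P :: "nat \<Rightarrow> real" and m :: nat
  assumes sumP: "(\<Sum>i<n. P i) = 1"
  shows "(\<Sum>s\<in>PiE {..<m} (\<lambda>_. {..<n}). (\<Prod>k<m. P (s k))) = 1"
  using E_gen[where K="{}" and m=m and n=n and P=P] assms by simp

lemma E_pair:
  fixes P :: "nat \<Rightarrow> real" and m :: nat
  assumes kl: "k \<noteq> l" "k < m" "l < m" and sumP: "(\<Sum>i<n. P i) = 1"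
  shows "(\<Sum>s\<in>PiE {..<m} (\<lambda>_. {..<n}). (\<Prod>k<m. P (s k)) * f (s k) (s l))
       = (\<Sum>i<n. \<Sum>j<n. P i * P j * f i j)"
proof -
  define H where "H i j k' a = (if k' = k then (if a = i then 1 else 0) else (if a = j then 1 else (0::real)))" for i j k' and a :: nat
  have eq: "f (s k) (s l) = (\<Sum>i<n. \<Sum>j<n. (\<Prod>k'\<in>{k,l}. H i j k' (s k')) * f i j)"
    if "s \<in> PiE {..<m} (\<lambda>_. {..<n})" for s
  proof -
    have "s k < n" "s l < n" using that kl by auto
    have hp: "(\<Prod>k'\<in>{k,l}. H i j k' (s k')) * f i j = (if i = s k \<and> j = s l then f i j else 0)" for i j
      using kl by (auto simp: H_def)
    have hi: "(\<Sum>j<n. (\<Prod>k'\<in>{k,l}. H i j k' (s k')) * f i j) = (if i = s k then f i (s l) else 0)" for i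
      using \<open>s l < n\<close> by (cases "i = s k") (simp_all add: hp)
    have "(\<Sum>i<n. \<Sum>j<n. (\<Prod>k'\<in>{k,l}. H i j k' (s k')) * f i j) = f (s k) (s l)"
      using \<open>s k < n\<close> by (simp add: hi)
    then show ?thesis by simp
  qed
  have "(\<Sum>s\<in>PiE {..<m} (\<lambda>_. {..<n}). (\<Prod>k<m. P (s k)) * f (s k) (s l))
     = (\<Sum>s\<in>PiE {..<m} (\<lambda>_. {..<n}). \<Sum>i<n. \<Sum>j<n. ((\<Prod>k<m. P (s k)) * (\<Prod>k'\<in>{k,l}. H i j k' (s k'))) * f i j)"
  proof (rule sum.cong[OF refl])
    fix s assume s: "s \<in> PiE {..<m} (\<lambda>_. {..<n})"
    show "(\<Prod>k<m. P (s k)) * f (s k) (s l) = (\<Sum>i<n. \<Sum>j<n. ((\<Prod>k<m. P (s k)) * (\<Prod>k'\<in>{k,l}. H i j k' (s k'))) * f i j)"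
      unfolding eq[OF s] by (simp only: sum_distrib_left mult.assoc)
  qed
  also have "\<dots> = (\<Sum>i<n. \<Sum>j<n. (\<Sum>s\<in>PiE {..<m} (\<lambda>_. {..<n}). (\<Prod>k<m. P (s k)) * (\<Prod>k'\<in>{k,l}. H i j k' (s k'))) * f i j)"
  proof -
    have "(\<Sum>s\<in>PiE {..<m} (\<lambda>_. {..<n}). \<Sum>i<n. \<Sum>j<n. ((\<Prod>k<m. P (s k)) * (\<Prod>k'\<in>{k,l}. H i j k' (s k'))) * f i j)
      = (\<Sum>i<n. \<Sum>s\<in>PiE {..<m} (\<lambda>_. {..<n}). \<Sum>j<n. ((\<Prod>k<m. P (s k)) * (\<Prod>k'\<in>{k,l}. H i j k' (s k'))) * f i j)"
      by (rule sum.swap)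
    also have "\<dots> = (\<Sum>i<n. \<Sum>j<n. \<Sum>s\<in>PiE {..<m} (\<lambda>_. {..<n}). ((\<Prod>k<m. P (s k)) * (\<Prod>k'\<in>{k,l}. H i j k' (s k'))) * f i j)"
      by (intro sum.cong refl sum.swap)
    also have "\<dots> = (\<Sum>i<n. \<Sum>j<n. (\<Sum>s\<in>PiE {..<m} (\<lambda>_. {..<n}). (\<Prod>k<m. P (s k)) * (\<Prod>k'\<in>{k,l}. H i j k' (s k'))) * f i j)"
      by (intro sum.cong refl) (rule sum_distrib_right[symmetric])
    finally show ?thesis .
  qed
  also have "\<dots> = (\<Sum>i<n. \<Sum>j<n. (\<Prod>k'\<in>{k,l}. \<Sum>a<n. P a * H i j k' a) * f i j)"
    using E_gen[where K="{k,l}" and m=m and n=n and P=P] kl sumP by simp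
  also have "\<dots> = (\<Sum>i<n. \<Sum>j<n. P i * P j * f i j)"
  proof (intro sum.cong refl)
    fix i j assume ij: "i \<in> {..<n}" "j \<in> {..<n}"
    have "(\<Sum>a<n. P a * H i j k a) = (\<Sum>a<n. if a = i then P a else 0)"
      by (intro sum.cong refl) (simp add: H_def)
    also have "\<dots> = P i" using ij by simp
    finally have h1: "(\<Sum>a<n. P a * H i j k a) = P i" .
    have "(\<Sum>a<n. P a * H i j l a) = (\<Sum>a<n. if a = j then P a else 0)"
      using kl by (intro sum.cong refl) (simp add: H_def)
    also have "\<dots> = P j" using ij by simp
    finally have h2: "(\<Sum>a<n. P a * H i j l a) = P j" .
    show "(\<Prod>k'\<in>{k,l}. \<Sum>a<n. P a * H i j k' a) * f i j = P i * P j * f i j"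
      using kl h1 h2 by simp
  qed
  finally show ?thesis .
qed

lemma lin:
  fixes w :: "'s \<Rightarrow> real"
  shows "(\<Sum>s\<in>S. w s * (a + b * (\<Sum>k\<in>K. u s k) + c * (\<Sum>k\<in>K. \<Sum>l\<in>K. v s k l)))
   = a * (\<Sum>s\<in>S. w s) + b * (\<Sum>k\<in>K. \<Sum>s\<in>S. w s * u s k) + c * (\<Sum>k\<in>K. \<Sum>l\<in>K. \<Sum>s\<in>S. w s * v s k l)"
  by (simp add: sum.distrib distrib_left sum_distrib_left sum_distrib_right mult_ac sum.swap[of _ S])

lemma sumdiag:
  "(\<Sum>k<m. \<Sum>l<m. if k = l then D else A) = real m * D + (real m * real m - real m) * (A::real)"
proof -
  have "(\<Sum>l<m. if k = l then D else A) = D + (real m - 1) * A" if "k < m" for k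
  proof -
    have "(\<Sum>l<m. if k = l then D else A) = (\<Sum>l<m. A + (if k = l then D - A else 0))"
      by (intro sum.cong) auto
    also have "\<dots> = real m * A + (D - A)" using that by (simp add: sum.distrib)
    finally show ?thesis by (simp add: algebra_simps)
  qed
  then have "(\<Sum>k<m. \<Sum>l<m. if k = l then D else A) = (\<Sum>k<m. D + (real m - 1) * A)" by simp
  then show ?thesis by (simp add: algebra_simps)
qed

lemma E_sq:
  fixes g :: "nat \<Rightarrow> 'v::real_inner" and P :: "nat \<Rightarrow> real"
  assumes Ppos: "\<And>i. i < n \<Longrightarrow> P i > 0" and sumP: "(\<Sum>i<n. P i) = 1" and m1: "m \<ge> 1"
  shows "(\<Sum>s\<in>PiE {..<m} (\<lambda>_. {..<n}). (\<Prod>k<m. P (s k)) * (norm (f0 + alpha *\<^sub>R gbar n m g P s - fstar))\<^sup>2)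
    = (norm (f0 - fstar))\<^sup>2 + 2 * alpha / real m * (\<Sum>k<m. \<Sum>i<n. inner (f0 - fstar) (g i) / real n)
      + alpha\<^sup>2 / (real m)\<^sup>2 * (real m * (\<Sum>i<n. (norm (g i))\<^sup>2 / ((real n)\<^sup>2 * P i))
          + (real m * real m - real m) * (\<Sum>i<n. \<Sum>j<n. inner (g i) (g j) / (real n)\<^sup>2))"
proof -
  have Pnz: "P i \<noteq> 0" if "i < n" for i using Ppos[OF that] by simp
  define d where "d = f0 - fstar"
  define Y where "Y i = (1 / (real n * P i)) *\<^sub>R g i" for i
  define S where "S = PiE {..<m} (\<lambda>_. {..<n::nat})"
  define w where "w s = (\<Prod>k<m. P (s k))" for s :: "nat \<Rightarrow> nat"
  define D where "D = (\<Sum>i<n. (norm (g i))\<^sup>2 / ((real n)\<^sup>2 * P i))"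
  define A where "A = (\<Sum>i<n. \<Sum>j<n. inner (g i) (g j) / (real n)\<^sup>2)"
  have nexp: "(norm (f0 + alpha *\<^sub>R gbar n m g P s - fstar))\<^sup>2
      = (norm d)\<^sup>2 + 2 * alpha / real m * (\<Sum>k<m. inner d (Y (s k)))
        + alpha\<^sup>2 / (real m)\<^sup>2 * (\<Sum>k<m. \<Sum>l<m. inner (Y (s k)) (Y (s l)))" for s
  proof -
    define V where "V = (\<Sum>k<m. Y (s k))"
    have "f0 + alpha *\<^sub>R gbar n m g P s - fstar = d + (alpha / real m) *\<^sub>R V"
      by (simp add: gbar_def d_def V_def Y_def algebra_simps)
    then have "(norm (f0 + alpha *\<^sub>R gbar n m g P s - fstar))\<^sup>2 = inner (d + (alpha / real m) *\<^sub>R V) (d + (alpha / real m) *\<^sub>R V)"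
      by (simp add: power2_norm_eq_inner)
    also have "\<dots> = (norm d)\<^sup>2 + 2 * (alpha / real m) * inner d V + (alpha / real m)\<^sup>2 * inner V V"
      unfolding power2_norm_eq_inner by (simp add: inner_add_left inner_add_right inner_commute power2_eq_square algebra_simps)
    also have "inner d V = (\<Sum>k<m. inner d (Y (s k)))" by (simp add: V_def inner_sum_right)
    also have "inner V V = (\<Sum>k<m. \<Sum>l<m. inner (Y (s k)) (Y (s l)))"
      by (simp add: V_def inner_sum_right inner_sum_left) (rule sum.swap)
    finally show ?thesis by (simp add: power_divide)
  qed
  have "(\<Sum>s\<in>S. w s * (norm (f0 + alpha *\<^sub>R gbar n m g P s - fstar))\<^sup>2)
     = (norm d)\<^sup>2 * (\<Sum>s\<in>S. w s) + 2 * alpha / real m * (\<Sum>k<m. \<Sum>s\<in>S. w s * inner d (Y (s k)))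
       + alpha\<^sup>2 / (real m)\<^sup>2 * (\<Sum>k<m. \<Sum>l<m. \<Sum>s\<in>S. w s * inner (Y (s k)) (Y (s l)))"
    unfolding nexp by (rule lin)
  also have "(\<Sum>s\<in>S. w s) = 1" unfolding S_def w_def by (rule E_const[OF sumP])
  also have "(\<Sum>k<m. \<Sum>s\<in>S. w s * inner d (Y (s k))) = (\<Sum>k<m. \<Sum>i<n. inner d (g i) / real n)"
  proof (intro sum.cong refl)
    fix k assume "k \<in> {..<m}"
    then have kk: "k < m" by simp
    have "(\<Sum>s\<in>S. w s * inner d (Y (s k))) = (\<Sum>i<n. P i * inner d (Y i))"
      unfolding S_def w_def by (rule E_one[where h="\<lambda>i. inner d (Y i)", OF kk sumP])
    also have "\<dots> = (\<Sum>i<n. inner d (g i) / real n)"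
      by (intro sum.cong refl) (auto simp: Pnz Y_def field_simps)
    finally show "(\<Sum>s\<in>S. w s * inner d (Y (s k))) = (\<Sum>i<n. inner d (g i) / real n)" .
  qed
  also have "(\<Sum>k<m. \<Sum>l<m. \<Sum>s\<in>S. w s * inner (Y (s k)) (Y (s l))) = (\<Sum>k<m. \<Sum>l<m. if k = l then D else A)"
  proof (intro sum.cong refl)
    fix k l assume kl: "k \<in> {..<m}" "l \<in> {..<m}"
    then have kk: "k < m" and ll: "l < m" by auto
    show "(\<Sum>s\<in>S. w s * inner (Y (s k)) (Y (s l))) = (if k = l then D else A)"
    proof (cases "k = l")
      case True
      have "(\<Sum>s\<in>S. w s * inner (Y (s k)) (Y (s l))) = (\<Sum>i<n. P i * inner (Y i) (Y i))"
        unfolding S_def w_def True by (rule E_one[where h="\<lambda>i. inner (Y i) (Y i)", OF ll sumP])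
      also have "\<dots> = D" unfolding D_def
        by (intro sum.cong refl) (auto simp: Pnz Y_def field_simps dot_square_norm power2_eq_square)
      finally show ?thesis using True by simp
    next
      case False
      have "(\<Sum>s\<in>S. w s * inner (Y (s k)) (Y (s l))) = (\<Sum>i<n. \<Sum>j<n. P i * P j * inner (Y i) (Y j))"
        unfolding S_def w_def by (intro E_pair[where f="\<lambda>i j. inner (Y i) (Y j)", OF False kk ll sumP])
      also have "\<dots> = A" unfolding A_def
        by (intro sum.cong refl) (auto simp: Pnz Y_def field_simps power2_eq_square)
      finally show ?thesis using False by simp
    qed
  qed
  also have "\<dots> = real m * D + (real m * real m - real m) * A" by (rule sumdiag)
  finally have X: "(\<Sum>s\<in>S. w s * (norm (f0 + alpha *\<^sub>R gbar n m g P s - fstar))\<^sup>2)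
     = (norm d)\<^sup>2 * 1 + 2 * alpha / real m * (\<Sum>k<m. \<Sum>i<n. inner d (g i) / real n)
       + alpha\<^sup>2 / (real m)\<^sup>2 * (real m * D + (real m * real m - real m) * A)" .
  show ?thesis using X unfolding S_def w_def d_def D_def A_def by (simp only: mult_1_right)
qed

lemma cs_bound:
  fixes G P :: "nat \<Rightarrow> real"
  assumes Ppos: "\<And>i. i < n \<Longrightarrow> P i > 0" and sumP: "(\<Sum>i<n. P i) = 1"
  shows "(\<Sum>i<n. G i)\<^sup>2 \<le> (\<Sum>i<n. (G i)\<^sup>2 / P i)"
proof -
  define c where "c = (\<Sum>i<n. G i)"
  have t: "2 * c * G i - c\<^sup>2 * P i \<le> (G i)\<^sup>2 / P i" if "i < n" for i
  proof -
    have p: "P i > 0" using Ppos that by simp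
    have "0 \<le> (G i - c * P i)\<^sup>2 / P i" using p by simp
    also have "(G i - c * P i)\<^sup>2 / P i = (G i)\<^sup>2 / P i - 2 * c * G i + c\<^sup>2 * P i"
      using p by (simp add: field_simps power2_eq_square)
    finally show ?thesis by simp
  qed
  have "(\<Sum>i<n. 2 * c * G i - c\<^sup>2 * P i) \<le> (\<Sum>i<n. (G i)\<^sup>2 / P i)"
    by (rule sum_mono) (use t in simp)
  moreover have "(\<Sum>i<n. 2 * c * G i - c\<^sup>2 * P i) = c\<^sup>2"
    by (simp add: sum_subtractf sum_distrib_left[symmetric] sumP c_def power2_eq_square)
  ultimately show ?thesis by (simp add: c_def)
qed

lemma D_rescale:
  fixes G P :: "nat \<Rightarrow> real"
  shows "(\<Sum>i<n. (G i)\<^sup>2 / ((real n)\<^sup>2 * P i)) = (\<Sum>i<n. (G i)\<^sup>2 / P i) / (real n)\<^sup>2"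
  by (simp add: sum_divide_distrib divide_divide_eq_left mult.commute)

theorem theorem1:
  fixes ev :: "'v::real_inner \<Rightarrow> 'a \<Rightarrow> real^'k::finite"
    and x :: "nat \<Rightarrow> 'a" and z :: "nat \<Rightarrow> 'k"
    and n m :: nat and f0 fstar :: 'v and g :: "nat \<Rightarrow> 'v"
    and beta alpha :: real
  assumes M2: "CARD('k) \<ge> 2"
    and n1: "n \<ge> 1" and m1: "m \<ge> 1"
    and ev_add: "\<And>f h a. ev (f + h) a = ev f a + ev h a"
    and ev_scale: "\<And>c f a. ev (c *\<^sub>R f) a = c *\<^sub>R ev f a"
    and fstar_min: "\<And>f. mc_risk ev n x z fstar \<le> mc_risk ev n x z f"
    and beta_pos: "beta > 0"
    and g_norm: "\<And>i. i < n \<Longrightarrow> norm (g i) = beta * norm (bweight (z i) (ev f0 (x i)))"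
  shows "is_sampling_dist n (\<lambda>i. norm (bweight (z i) (ev f0 (x i))) /
                                 (\<Sum>j<n. norm (bweight (z j) (ev f0 (x j)))))
       \<and> (\<forall>P. is_sampling_dist n P \<longrightarrow>
            exp_progress n m g alpha f0 fstar P
              \<le> exp_progress n m g alpha f0 fstar
                   (\<lambda>i. norm (bweight (z i) (ev f0 (x i))) /
                        (\<Sum>j<n. norm (bweight (z j) (ev f0 (x j))))))"
proof -
  define W where "W i = norm (bweight (z i) (ev f0 (x i)))" for i
  define WS where "WS = (\<Sum>j<n. W j)"
  define Q where "Q i = W i / WS" for i
  have Qeq: "(\<lambda>i. norm (bweight (z i) (ev f0 (x i))) / (\<Sum>j<n. norm (bweight (z j) (ev f0 (x j))))) = Q"
    by (simp add: fun_eq_iff Q_def W_def WS_def)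
  have Wpos: "W i > 0" for i
  proof -
    have ne: "UNIV - {z i} \<noteq> {}"
    proof
      assume "UNIV - {z i} = {}"
      then have "(UNIV :: 'k set) = {z i}" by auto
      then have "CARD('k) = card {z i}" by (rule arg_cong[where f=card])
      then have "CARD('k) = 1" by simp
      with M2 show False by simp
    qed
    have "bweight (z i) (ev f0 (x i)) $ z i
        = (\<Sum>j\<in>UNIV - {z i}. exp (- (ev f0 (x i) $ z i - ev f0 (x i) $ j) / 2))"
      by (simp add: bweight_def)
    also have "\<dots> > 0" using ne by (intro sum_pos) auto
    finally have "0 < bweight (z i) (ev f0 (x i)) $ z i" .
    also have "\<dots> \<le> norm (bweight (z i) (ev f0 (x i)))"
      by (metis abs_ge_self component_le_norm_cart order_trans)
    finally show ?thesis by (simp add: W_def)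
  qed
  have WSpos: "WS > 0" unfolding WS_def using n1 Wpos by (intro sum_pos) (auto simp: lessThan_empty_iff)
  have Qpos: "\<And>i. i < n \<Longrightarrow> Q i > 0" using Wpos WSpos by (simp add: Q_def)
  have sumQ: "(\<Sum>i<n. Q i) = 1"
    using WSpos by (simp add: Q_def sum_divide_distrib[symmetric] WS_def)
  have sdQ: "is_sampling_dist n Q" using Qpos sumQ by (simp add: is_sampling_dist_def)
  define G where "G i = norm (g i)" for i
  have GQ: "(\<Sum>i<n. (G i)\<^sup>2 / Q i) = (\<Sum>i<n. G i)\<^sup>2"
  proof -
    have "(\<Sum>i<n. (G i)\<^sup>2 / Q i) = (\<Sum>i<n. beta\<^sup>2 * WS * W i)"
    proof (intro sum.cong refl)
      fix i assume "i \<in> {..<n}"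
      then have "G i = beta * W i" by (simp add: G_def W_def g_norm)
      then show "(G i)\<^sup>2 / Q i = beta\<^sup>2 * WS * W i"
        using Wpos[of i] WSpos by (simp add: Q_def field_simps power2_eq_square)
    qed
    also have "\<dots> = (beta * WS)\<^sup>2" by (simp add: sum_distrib_left[symmetric] WS_def power2_eq_square)
    also have "beta * WS = (\<Sum>i<n. G i)"
      by (simp add: WS_def sum_distrib_left G_def W_def g_norm)
    finally show ?thesis .
  qed
  have main: "exp_progress n m g alpha f0 fstar P \<le> exp_progress n m g alpha f0 fstar Q"
    if sdP: "is_sampling_dist n P" for P
  proof -
    have Ppos: "\<And>i. i < n \<Longrightarrow> P i > 0" and sumP: "(\<Sum>i<n. P i) = 1"
      using sdP by (auto simp: is_sampling_dist_def)
    have "(\<Sum>i<n. (G i)\<^sup>2 / Q i) \<le> (\<Sum>i<n. (G i)\<^sup>2 / P i)"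
      unfolding GQ by (rule cs_bound[OF Ppos sumP])
    then have "(\<Sum>i<n. (G i)\<^sup>2 / Q i) / (real n)\<^sup>2 \<le> (\<Sum>i<n. (G i)\<^sup>2 / P i) / (real n)\<^sup>2"
      by (simp add: divide_right_mono)
    then have DD: "(\<Sum>i<n. (norm (g i))\<^sup>2 / ((real n)\<^sup>2 * Q i)) \<le> (\<Sum>i<n. (norm (g i))\<^sup>2 / ((real n)\<^sup>2 * P i))"
      unfolding D_rescale G_def .
    have "alpha\<^sup>2 / (real m)\<^sup>2 * (real m * (\<Sum>i<n. (norm (g i))\<^sup>2 / ((real n)\<^sup>2 * Q i)))
       \<le> alpha\<^sup>2 / (real m)\<^sup>2 * (real m * (\<Sum>i<n. (norm (g i))\<^sup>2 / ((real n)\<^sup>2 * P i)))"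
      by (intro mult_left_mono DD) auto
    moreover have "exp_progress n m g alpha f0 fstar P = (norm (f0 - fstar))\<^sup>2 - ((norm (f0 - fstar))\<^sup>2 + 2 * alpha / real m * (\<Sum>k<m. \<Sum>i<n. inner (f0 - fstar) (g i) / real n)
      + alpha\<^sup>2 / (real m)\<^sup>2 * (real m * (\<Sum>i<n. (norm (g i))\<^sup>2 / ((real n)\<^sup>2 * P i))
          + (real m * real m - real m) * (\<Sum>i<n. \<Sum>j<n. inner (g i) (g j) / (real n)\<^sup>2)))"
      unfolding exp_progress_def by (rule arg_cong[where f="\<lambda>t. (norm (f0 - fstar))\<^sup>2 - t"], rule E_sq[OF Ppos sumP m1])
    moreover have "exp_progress n m g alpha f0 fstar Q = (norm (f0 - fstar))\<^sup>2 - ((norm (f0 - fstar))\<^sup>2 + 2 * alpha / real m * (\<Sum>k<m. \<Sum>i<n. inner (f0 - fstar) (g i) / real n)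
      + alpha\<^sup>2 / (real m)\<^sup>2 * (real m * (\<Sum>i<n. (norm (g i))\<^sup>2 / ((real n)\<^sup>2 * Q i))
          + (real m * real m - real m) * (\<Sum>i<n. \<Sum>j<n. inner (g i) (g j) / (real n)\<^sup>2)))"
      unfolding exp_progress_def by (rule arg_cong[where f="\<lambda>t. (norm (f0 - fstar))\<^sup>2 - t"], rule E_sq[OF Qpos sumQ m1])
    ultimately show ?thesis by (simp only: distrib_left)
  qed
  show ?thesis unfolding Qeq using sdQ main by blast
qed

end
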